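(* Let $\mathcal{X}_{obs}\subset\mathbb{R}^n$ be a nonempty compact convex set. Let $x_0^{plan},\dots,x_N^{plan}\in\mathbb{R}^n$ with $x_{j}^{plan}\ne x_{j-1}^{plan}$, let $0=t_0<t_1<\dots<t_N=T$, and let $x^{plan}(t)$ be the piecewise-linear path with $x^{plan}(t_j)=x_j^{plan}$, linear on each $[t_{j-1},t_j]$; let $\mathcal{S}_j$ be the segment from $x_{j-1}^{plan}$ to $x_j^{plan}$ and assume $\mathcal{S}_j\cap\mathcal{X}_{obs}=\emptyset$ for all $j$. Let $\pmb{x}^{sys}(t)=x^{plan}(t)+R^{1/2}W(t)$, $t\in[0,T]$, where $W$ is a standard $n$-dimensional Brownian motion from the origin and $R$ is symmetric positive definite (equivalently, $d\pmb{x}^{sys}=v_j^{plan}dt+R^{1/2}dW$ on $[t_{j-1},t_j)$ with $v_j^{plan}(t_j-t_{j-1})=x_j^{plan}-x_{j-1}^{plan}$, and $\pmb{x}^{sys}(0)=x_0^{plan}$). For each $j$, let $(y_1^*,y_2^* )$ minimize $\|y_1-y_2\|$ over $y_1\in\mathcal{X}_{obs}$, $y_2\in\mathcal{S}_j$, set $d_j=\|y_1^*-y_2^*\|$, $a_j=(y_1^*-y_2^* )/d_j$, $\pmb{w}_j(t)=a_j^T(\pmb{x}^{sys}(t)-x^{plan}(t))$, $\mathcal{E}_j=\{\max_{t\in[t_{j-1},t_j]}\pmb{w}_j(t)\ge d_j\}$ and $p_j=P(\mathcal{E}_j)$. For each $j$ choose a discretization $t_{j-1}=\hat t_j^0<\dots<\hat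 t_j^{r_j}=t_j$, let $\mathcal{D}_j=\bigcap_{i=0}^{r_j}\{\pmb{w}_j(\hat t_j^i)<d_j\}$ and $p_{j,j+1}^{LB}=1-P(\mathcal{D}_j)-P(\mathcal{D}_{j+1})+P(\mathcal{D}_j\cap\mathcal{D}_{j+1})$. Then the continuous-time risk $\mathcal{R}=P\big(\exists t\in[0,T]:\ \pmb{x}^{sys}(t)\in\mathcal{X}_{obs}\big)$ satisfies $$\mathcal{R}\le\sum_{j=1}^N p_j\quad\text{and}\quad \mathcal{R}\le\sum_{j=1}^N p_j-\sum_{j=1}^{N-1}p_{j,j+1}^{LB}.$$
   Context: $p_j$ can be evaluated as $P(\pmb{w}_j(t_{j-1})\ge d_j)+2P(\pmb{w}_j(t_{j-1})<d_j,\ \pmb{w}_j(t_j)\ge d_j)$, and $p_{j,j+1}^{LB}$ is a lower bound for $P(\mathcal{E}_j\cap\mathcal{E}_{j+1})$; the second inequality is the paper's "second-order risk bound" and the first its "first-order risk bound". *)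

theory Defs
  imports "HOL-Probability.Probability"
begin

definition std_brownian_motion :: "'a measure \<Rightarrow> (real \<Rightarrow> 'a \<Rightarrow> real^'n) \<Rightarrow> bool" where
  "std_brownian_motion M W \<longleftrightarrow>
     prob_space M \<and>
     (\<forall>s\<ge>0. W s \<in> borel_measurable M) \<and>
     (\<forall>\<omega>\<in>space M. W 0 \<omega> = 0 \<and> continuous_on {0..} (\<lambda>s. W s \<omega>)) \<and>
     (\<forall>(ts :: nat \<Rightarrow> real) (k :: nat). 0 \<le> ts 0 \<and> (\<forall>m<k. ts m < ts (Suc m)) \<longrightarrow>
        prob_space.indep_vars M (\<lambda>_. borel)
          (\<lambda>(i, m) \<omega>. W (ts (Suc m)) \<omega> $ i - W (ts m) \<omega> $ i) (UNIV \<times> {..<k}) \<and>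
        (\<forall>i. \<forall>m<k. distributed M lborel (\<lambda>\<omega>. W (ts (Suc m)) \<omega> $ i - W (ts m) \<omega> $ i)
              (\<lambda>x. ennreal (normal_density 0 (sqrt (ts (Suc m) - ts m)) x))))"

definition sym_pos_def :: "real^'n^'n \<Rightarrow> bool" where
  "sym_pos_def A \<longleftrightarrow> transpose A = A \<and> (\<forall>x. x \<noteq> 0 \<longrightarrow> x \<bullet> (A *v x) > 0)"

text \<open>w_j(s) = a^T (x_sys(s) - x_plan(s)) = a^T R^(1/2) W(s)\<close>
definition wproc :: "real^'n^'n \<Rightarrow> (real \<Rightarrow> 'a \<Rightarrow> real^'n) \<Rightarrow> real^'n \<Rightarrow> real \<Rightarrow> 'a \<Rightarrow> real" where
  "wproc Rh W a s \<omega> = a \<bullet> (Rh *v W s \<omega>)"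

definition exc_event :: "'a measure \<Rightarrow> real^'n^'n \<Rightarrow> (real \<Rightarrow> 'a \<Rightarrow> real^'n) \<Rightarrow> real^'n \<Rightarrow> real \<Rightarrow> real \<Rightarrow> real \<Rightarrow> 'a set" where
  "exc_event M Rh W a d lo hi = {\<omega>\<in>space M. Sup ((\<lambda>s. wproc Rh W a s \<omega>) ` {lo..hi}) \<ge> d}"

definition disc_event :: "'a measure \<Rightarrow> real^'n^'n \<Rightarrow> (real \<Rightarrow> 'a \<Rightarrow> real^'n) \<Rightarrow> real^'n \<Rightarrow> real \<Rightarrow> (nat \<Rightarrow> real) \<Rightarrow> nat \<Rightarrow> 'a set" where
  "disc_event M Rh W a d th r = {\<omega>\<in>space M. \<forall>i\<le>r. wproc Rh W a (th i) \<omega> < d}"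

end

theory Submission
  imports Defs
begin

lemma lin_cont: "continuous_on UNIV (\<lambda>x::real^'n. c \<bullet> (Rh *v x))"
  by (intro continuous_intros linear_continuous_on matrix_vector_mul_linear bounded_linear_inner_right)

lemma wproc_cont:
  assumes "continuous_on {0..} (\<lambda>s. W s \<omega>)" "0 \<le> lo"
  shows "continuous_on {lo..hi} (\<lambda>s. wproc Rh W c s \<omega>)"
proof -
  have "continuous_on {0..} (\<lambda>s. c \<bullet> (Rh *v W s \<omega>))"
    using continuous_on_compose2[OF lin_cont assms(1)] by auto
  then show ?thesis unfolding wproc_def
    by (rule continuous_on_subset) (use assms in auto)
qed

lemma wproc_meas:
  assumes "W s \<in> borel_measurable M"
  shows "(\<lambda>\<omega>. wproc Rh W c s \<omega>) \<in> borel_measurable M"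
  unfolding wproc_def
  using measurable_compose[OF assms borel_measurable_continuous_onI[OF lin_cont[of c Rh]]] by simp

lemma sup_ge:
  fixes g :: "real \<Rightarrow> real"
  assumes "continuous_on {lo..hi} g" "s \<in> {lo..hi}" "g s \<ge> d"
  shows "Sup (g ` {lo..hi}) \<ge> d"
proof -
  have "bdd_above (g ` {lo..hi})"
    using assms(1) by (intro bounded_imp_bdd_above compact_imp_bounded compact_continuous_image) auto
  then have "g s \<le> Sup (g ` {lo..hi})" using assms(2) by (intro cSUP_upper)
  then show ?thesis using assms(3) by linarith
qed

lemma sup_rat:
  fixes g :: "real \<Rightarrow> real"
  assumes "continuous_on {lo..hi} g" "lo < hi"
  shows "Sup (g ` {lo..hi}) = Sup (g ` ({lo<..<hi} \<inter> \<rat>))"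
proof -
  define A where "A = {lo<..<hi} \<inter> \<rat>"
  have cl: "closure A = {lo..hi}"
    unfolding A_def using assms(2)
    by (subst closure_open_Int_superset) (auto simp: Rats_closure_real)
  have bdd: "bdd_above (g ` {lo..hi})"
    using assms(1) by (intro bounded_imp_bdd_above compact_imp_bounded compact_continuous_image) auto
  have Asub: "A \<subseteq> {lo..hi}" unfolding A_def by auto
  have Ane: "A \<noteq> {}" using cl assms(2) by auto
  have bddA: "bdd_above (g ` A)" using bdd Asub by (meson bdd_above_mono image_mono)
  have "g ` closure A \<subseteq> {..Sup (g ` A)}"
  proof (rule image_closure_subset)
    show "continuous_on (closure A) g" using cl assms(1) by simp
    show "g ` A \<subseteq> {..Sup (g ` A)}" using bddA by (auto intro: cSUP_upper)
  qed auto
  then have le: "Sup (g ` {lo..hi}) \<le> Sup (g ` A)"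
    using cl assms(2) by (intro cSUP_least) (auto simp: image_subset_iff)
  have ge: "Sup (g ` A) \<le> Sup (g ` {lo..hi})"
    using Ane bdd Asub by (intro cSUP_subset_mono) auto
  show ?thesis using le ge unfolding A_def by simp
qed

lemma exists_interval:
  fixes t :: "nat \<Rightarrow> real"
  assumes "n \<ge> 1" "t 0 \<le> s" "s \<le> t n"
  shows "\<exists>j\<in>{1..n}. t (j - 1) \<le> s \<and> s \<le> t j"
  using assms
proof (induction n)
  case 0 then show ?case by simp
next
  case (Suc n)
  show ?case
  proof (cases "n \<ge> 1 \<and> s \<le> t n")
    case True
    then obtain j where "j\<in>{1..n}" "t (j - 1) \<le> s \<and> s \<le> t j" using Suc by auto
    then show ?thesis by (intro bexI[of _ j]) auto
  next
    case False
    then have "t n \<le> s" using Suc by (cases n) auto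
    then show ?thesis using Suc by (intro bexI[of _ "Suc n"]) auto
  qed
qed

lemma strict_mono_upto:
  fixes t :: "nat \<Rightarrow> real"
  assumes "\<forall>j<N. t j < t (Suc j)" "i \<le> j" "j \<le> N"
  shows "t i \<le> t j"
  using assms(2,3)
proof (induction j)
  case 0 then show ?case by simp
next
  case (Suc j)
  show ?case
  proof (cases "i = Suc j")
    case True then show ?thesis by simp
  next
    case False
    then have ij: "i \<le> j" and jN: "j < N" using Suc.prems by auto
    have "t i \<le> t j" using Suc.IH ij jN by simp
    moreover have "t j < t (Suc j)" using assms(1) jN by simp
    ultimately show ?thesis by simp
  qed
qed

lemma chain_bound:
  assumes "finite_measure M" "\<forall>j. 1 \<le> j \<and> j \<le> n \<longrightarrow> A j \<in> sets M"
  shows "measure M (\<Union>j\<in>{1..n}. A j) \<le> (\<Sum>j=1..n. measure M (A j)) - (\<Sum>j=1..n-1. measure M (A j \<inter> A (Suc j)))"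
  using assms(2)
proof (induction n)
  case 0 then show ?case by simp
next
  case (Suc n)
  interpret finite_measure M by fact
  define U where "U = (\<Union>j\<in>{1..n}. A j)"
  have U: "U \<in> sets M" unfolding U_def using Suc.prems by auto
  have B: "A (Suc n) \<in> sets M" using Suc.prems by auto
  have IH: "measure M U \<le> (\<Sum>j=1..n. measure M (A j)) - (\<Sum>j=1..n-1. measure M (A j \<inter> A (Suc j)))"
    unfolding U_def using Suc by auto
  have eq: "(\<Union>j\<in>{1..Suc n}. A j) = U \<union> A (Suc n)"
    unfolding U_def by (auto simp: atLeastAtMostSuc_conv)
  have un: "measure M (U \<union> A (Suc n)) = measure M U + measure M (A (Suc n)) - measure M (U \<inter> A (Suc n))"
    using U B by (intro measure_Un3) (auto simp: fmeasurable_eq_sets)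
  show ?case
  proof (cases "n = 0")
    case True
    then show ?thesis using eq by (simp add: U_def)
  next
    case False
    have sub: "A n \<inter> A (Suc n) \<subseteq> U \<inter> A (Suc n)" unfolding U_def using False by (auto intro!: bexI[where x=n])
    have m: "measure M (A n \<inter> A (Suc n)) \<le> measure M (U \<inter> A (Suc n))"
      using U B sub by (intro finite_measure_mono) auto
    have s1: "(\<Sum>j=1..Suc n. measure M (A j)) = (\<Sum>j=1..n. measure M (A j)) + measure M (A (Suc n))"
      by simp
    have s2: "(\<Sum>j=1..Suc n - 1. measure M (A j \<inter> A (Suc j))) = (\<Sum>j=1..n-1. measure M (A j \<inter> A (Suc j))) + measure M (A n \<inter> A (Suc n))"
      using False by (cases n) (auto simp: sum.cl_ivl_Suc)
    show ?thesis unfolding eq un s1 s2 using IH m by linarith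
  qed
qed

theorem mainTheorem3:
  fixes M :: "'a measure" and W :: "real \<Rightarrow> 'a \<Rightarrow> real^'n"
    and Xobs :: "(real^'n) set" and N :: nat and T :: real
    and xp :: "nat \<Rightarrow> real^'n" and t :: "nat \<Rightarrow> real"
    and xplan :: "real \<Rightarrow> real^'n"
    and R Rh :: "real^'n^'n"
    and y1 y2 :: "nat \<Rightarrow> real^'n"
    and r :: "nat \<Rightarrow> nat" and th :: "nat \<Rightarrow> nat \<Rightarrow> real"
    and d :: "nat \<Rightarrow> real" and a :: "nat \<Rightarrow> real^'n"
    and p :: "nat \<Rightarrow> real" and pLB :: "nat \<Rightarrow> real" and Risk :: real
  assumes obs: "Xobs \<noteq> {}" "compact Xobs" "convex Xobs"
    and N: "N \<ge> 1"
    and xp_ne: "\<forall>j\<in>{1..N}. xp j \<noteq> xp (j - 1)"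
    and t0: "t 0 = 0" and tN: "t N = T" and t_mono: "\<forall>j<N. t j < t (Suc j)"
    and plan: "\<forall>j\<in>{1..N}. \<forall>s\<in>{t (j - 1)..t j}.
                 xplan s = xp (j - 1) + ((s - t (j - 1)) / (t j - t (j - 1))) *\<^sub>R (xp j - xp (j - 1))"
    and seg_free: "\<forall>j\<in>{1..N}. closed_segment (xp (j - 1)) (xp j) \<inter> Xobs = {}"
    and BM: "std_brownian_motion M W"
    and R: "sym_pos_def R" and Rh: "sym_pos_def Rh" "Rh ** Rh = R"
    and minimizers: "\<forall>j\<in>{1..N}. y1 j \<in> Xobs \<and> y2 j \<in> closed_segment (xp (j - 1)) (xp j) \<and>
        (\<forall>z1\<in>Xobs. \<forall>z2\<in>closed_segment (xp (j - 1)) (xp j). norm (y1 j - y2 j) \<le> norm (z1 - z2))"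
    and disc: "\<forall>j\<in>{1..N}. th j 0 = t (j - 1) \<and> th j (r j) = t j \<and> (\<forall>i<r j. th j i < th j (Suc i))"
  defines "d \<equiv> \<lambda>j. norm (y1 j - y2 j)"
    and "a \<equiv> \<lambda>j. (1 / d j) *\<^sub>R (y1 j - y2 j)"
    and "p \<equiv> \<lambda>j. measure M (exc_event M Rh W (a j) (d j) (t (j - 1)) (t j))"
    and "pLB \<equiv> \<lambda>j. 1 - measure M (disc_event M Rh W (a j) (d j) (th j) (r j))
                    - measure M (disc_event M Rh W (a (Suc j)) (d (Suc j)) (th (Suc j)) (r (Suc j)))
                    + measure M (disc_event M Rh W (a j) (d j) (th j) (r j)
                                 \<inter> disc_event M Rh W (a (Suc j)) (d (Suc j)) (th (Suc j)) (r (Suc j)))"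
    and "Risk \<equiv> measure M {\<omega>\<in>space M. \<exists>s\<in>{0..T}. xplan s + Rh *v W s \<omega> \<in> Xobs}"
  shows "Risk \<le> (\<Sum>j=1..N. p j) \<and> Risk \<le> (\<Sum>j=1..N. p j) - (\<Sum>j=1..N-1. pLB j)"
proof -
  note bm = BM[unfolded std_brownian_motion_def]
  have PS: "prob_space M" using bm by (rule conjunct1)
  have bm2: "\<forall>s\<ge>0. W s \<in> borel_measurable M" using bm[THEN conjunct2, THEN conjunct1] .
  have bm3: "\<forall>\<omega>\<in>space M. W 0 \<omega> = 0 \<and> continuous_on {0..} (\<lambda>s. W s \<omega>)"
    using bm[THEN conjunct2, THEN conjunct2, THEN conjunct1] .
  have measW: "\<And>s. s \<ge> 0 \<Longrightarrow> W s \<in> borel_measurable M" using bm2 by blast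
  have contW: "\<And>\<omega>. \<omega> \<in> space M \<Longrightarrow> continuous_on {0..} (\<lambda>s. W s \<omega>)" using bm3 by blast
  interpret prob_space M by (rule PS)
  have tge: "t i \<ge> 0" if "i \<le> N" for i
    using strict_mono_upto[OF t_mono, of 0 i] t0 that by auto
  have tlt: "t (j - 1) < t j" if "j \<in> {1..N}" for j
  proof -
    from that obtain k where "j = Suc k" "k < N" by (cases j) auto
    then show ?thesis using t_mono by auto
  qed
  define E where "E = (\<lambda>j. exc_event M Rh W (a j) (d j) (t (j - 1)) (t j))"
  define D where "D = (\<lambda>j. disc_event M Rh W (a j) (d j) (th j) (r j))"
  define C where "C = {\<omega>\<in>space M. \<exists>s\<in>{0..T}. xplan s + Rh *v W s \<omega> \<in> Xobs}"
  have dpos: "d j > 0" if "j \<in> {1..N}" for j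
  proof -
    have m: "y1 j \<in> Xobs" "y2 j \<in> closed_segment (xp (j - 1)) (xp j)"
      using bspec[OF minimizers that] by auto
    have "closed_segment (xp (j - 1)) (xp j) \<inter> Xobs = {}" using bspec[OF seg_free that] .
    then have "y1 j \<noteq> y2 j" using m by auto
    then show ?thesis unfolding d_def by simp
  qed
  have sep: "a j \<bullet> (z - y) \<ge> d j" if j: "j \<in> {1..N}" and z: "z \<in> Xobs"
    and y: "y \<in> closed_segment (xp (j - 1)) (xp j)" for j z y
  proof -
    define u where "u = y1 j - y2 j"
    have m: "y1 j \<in> Xobs" "y2 j \<in> closed_segment (xp (j - 1)) (xp j)"
      "\<forall>z1\<in>Xobs. \<forall>z2\<in>closed_segment (xp (j - 1)) (xp j). norm (y1 j - y2 j) \<le> norm (z1 - z2)"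
      using bspec[OF minimizers j] by auto
    have c1: "(y2 j - y1 j) \<bullet> (z - y1 j) \<le> 0"
    proof (rule any_closest_point_dot[of Xobs])
      show "convex Xobs" "closed Xobs" using obs compact_imp_closed by auto
      show "\<forall>z\<in>Xobs. dist (y2 j) (y1 j) \<le> dist (y2 j) z"
        using m by (auto simp: dist_norm norm_minus_commute)
    qed (use m z in auto)
    have c2: "(y1 j - y2 j) \<bullet> (y - y2 j) \<le> 0"
    proof (rule any_closest_point_dot[of "closed_segment (xp (j - 1)) (xp j)"])
      show "convex (closed_segment (xp (j - 1)) (xp j))" "closed (closed_segment (xp (j - 1)) (xp j))"
        by auto
      show "\<forall>z\<in>closed_segment (xp (j - 1)) (xp j). dist (y1 j) (y2 j) \<le> dist (y1 j) z"
        using m by (auto simp: dist_norm)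
    qed (use m y in auto)
    have uneg: "y2 j - y1 j = - u" unfolding u_def by simp
    have c1': "u \<bullet> (z - y1 j) \<ge> 0" using c1 unfolding uneg by simp
    have c2': "u \<bullet> (y2 j - y) \<ge> 0"
    proof -
      have "y2 j - y = - (y - y2 j)" by simp
      then show ?thesis using c2 unfolding u_def[symmetric] by (simp only: inner_minus_right)
    qed
    have zy: "z - y = (z - y1 j) + u + (y2 j - y)" unfolding u_def by simp
    have eq: "u \<bullet> (z - y) = u \<bullet> (z - y1 j) + u \<bullet> u + u \<bullet> (y2 j - y)"
      unfolding zy by (simp only: inner_add_right)
    have uu: "u \<bullet> u = (d j)^2" unfolding u_def d_def by (simp add: power2_norm_eq_inner)
    have ge: "u \<bullet> (z - y) \<ge> (d j)^2" using eq uu c1' c2' by linarith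
    have aeq: "a j \<bullet> (z - y) = (u \<bullet> (z - y)) / d j" unfolding a_def u_def by simp
    have dd: "(d j)^2 / d j = d j" using dpos[OF j] by (simp add: power2_eq_square)
    have "(d j)^2 / d j \<le> (u \<bullet> (z - y)) / d j" using ge dpos[OF j] by (intro divide_right_mono) auto
    then show ?thesis using aeq dd by linarith
  qed
  have wcont: "continuous_on {t (j - 1)..t j} (\<lambda>s. wproc Rh W (a j) s \<omega>)"
    if "j \<in> {1..N}" "\<omega> \<in> space M" for j \<omega>
    using that by (intro wproc_cont contW tge) auto
  have Emeas: "E j \<in> sets M" if j: "j \<in> {1..N}" for j
  proof -
    define Q where "Q = {t (j - 1)<..<t j} \<inter> \<rat>"
    define g where "g = (\<lambda>\<omega>. SUP q\<in>Q. wproc Rh W (a j) q \<omega>)"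
    have "E j = {\<omega>\<in>space M. g \<omega> \<ge> d j}"
      unfolding E_def exc_event_def g_def Q_def
      using sup_rat[OF wcont[OF j] tlt[OF j]] by auto
    moreover have "g \<in> borel_measurable M"
      unfolding g_def
    proof (rule borel_measurable_cSUP)
      show "countable Q" unfolding Q_def by (simp add: countable_rat)
      show "(\<lambda>\<omega>. wproc Rh W (a j) q \<omega>) \<in> borel_measurable M" if "q \<in> Q" for q
      proof -
        have "0 \<le> t (j - 1)" by (rule tge) (use j in auto)
        then show ?thesis using that unfolding Q_def by (intro wproc_meas measW) auto
      qed
      show "bdd_above ((\<lambda>q. wproc Rh W (a j) q \<omega>) ` Q)" if "\<omega> \<in> space M" for \<omega>
      proof -
        have "bdd_above ((\<lambda>q. wproc Rh W (a j) q \<omega>) ` {t (j - 1)..t j})"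
          using wcont[OF j that]
          by (intro bounded_imp_bdd_above compact_imp_bounded compact_continuous_image) auto
        then show ?thesis unfolding Q_def by (rule bdd_above_mono) auto
      qed
    qed
    then have "{\<omega>\<in>space M. g \<omega> \<ge> d j} \<in> sets M" by measurable
    ultimately show ?thesis by simp
  qed
  have thr: "t (j - 1) \<le> th j i \<and> th j i \<le> t j" if "j \<in> {1..N}" "i \<le> r j" for j i
  proof -
    have "\<forall>k<r j. th j k < th j (Suc k)" "th j 0 = t (j - 1)" "th j (r j) = t j"
      using disc that(1) by auto
    then show ?thesis using strict_mono_upto[of "r j" "th j" 0 i] strict_mono_upto[of "r j" "th j" i "r j"] that(2)
      by auto
  qed
  have Dmeas: "D j \<in> sets M" if j: "j \<in> {1..N}" for j
  proof -
    have "D j = space M \<inter> (\<Inter>i\<in>{..r j}. {\<omega>\<in>space M. wproc Rh W (a j) (th j i) \<omega> < d j})"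
      unfolding D_def disc_event_def by auto
    moreover have "(\<Inter>i\<in>{..r j}. {\<omega>\<in>space M. wproc Rh W (a j) (th j i) \<omega> < d j}) \<in> sets M"
    proof (rule sets.finite_INT)
      fix i assume "i \<in> {..r j}"
      moreover have "0 \<le> t (j - 1)" by (rule tge) (use j in auto)
      ultimately have "th j i \<ge> 0" using thr[OF j, of i] by auto
      then have "(\<lambda>\<omega>. wproc Rh W (a j) (th j i) \<omega>) \<in> borel_measurable M"
        by (intro wproc_meas measW)
      then show "{\<omega>\<in>space M. wproc Rh W (a j) (th j i) \<omega> < d j} \<in> sets M" by measurable
    qed auto
    ultimately show ?thesis by auto
  qed
  have compl: "space M - D j \<subseteq> E j" if j: "j \<in> {1..N}" for j
  proof
    fix \<omega> assume w: "\<omega> \<in> space M - D j"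
    then obtain i where i: "i \<le> r j" "wproc Rh W (a j) (th j i) \<omega> \<ge> d j"
      unfolding D_def disc_event_def by (auto simp: not_less)
    have "Sup ((\<lambda>s. wproc Rh W (a j) s \<omega>) ` {t (j - 1)..t j}) \<ge> d j"
      using sup_ge[OF wcont[OF j] _ i(2)] thr[OF j i(1)] w by auto
    then show "\<omega> \<in> E j" using w unfolding E_def exc_event_def by auto
  qed
  have cover: "C \<subseteq> (\<Union>j\<in>{1..N}. E j)"
  proof
    fix \<omega> assume "\<omega> \<in> C"
    then obtain s where w: "\<omega> \<in> space M" and s: "s \<in> {0..T}" and col: "xplan s + Rh *v W s \<omega> \<in> Xobs"
      unfolding C_def by auto
    obtain j where j: "j \<in> {1..N}" and sj: "t (j - 1) \<le> s" "s \<le> t j"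
      using exists_interval[OF N, of t s] s t0 tN by auto
    define u where "u = (s - t (j - 1)) / (t j - t (j - 1))"
    have u01: "0 \<le> u" "u \<le> 1" unfolding u_def using sj tlt[OF j] by (auto simp: field_simps)
    have sin: "s \<in> {t (j - 1)..t j}" using sj by simp
    have "xplan s = xp (j - 1) + u *\<^sub>R (xp j - xp (j - 1))"
      unfolding u_def using bspec[OF bspec[OF plan j] sin] .
    also have "\<dots> = (1 - u) *\<^sub>R xp (j - 1) + u *\<^sub>R xp j" by (simp add: algebra_simps)
    finally have "xplan s \<in> closed_segment (xp (j - 1)) (xp j)"
      using u01 by (auto simp: closed_segment_def intro!: exI[of _ u])
    from sep[OF j col this] have "wproc Rh W (a j) s \<omega> \<ge> d j" by (simp add: wproc_def)
    then have "Sup ((\<lambda>s. wproc Rh W (a j) s \<omega>) ` {t (j - 1)..t j}) \<ge> d j"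
      using sup_ge[OF wcont[OF j w]] sj by auto
    then show "\<omega> \<in> (\<Union>j\<in>{1..N}. E j)" using w j unfolding E_def exc_event_def by auto
  qed
  have Umeas: "(\<Union>j\<in>{1..N}. E j) \<in> sets M" using Emeas by auto
  have R1: "Risk \<le> measure M (\<Union>j\<in>{1..N}. E j)"
    unfolding Risk_def using cover Umeas C_def by (intro finite_measure_mono) auto
  have R2a: "measure M (\<Union>j\<in>{1..N}. E j) \<le> (\<Sum>j=1..N. measure M (E j)) - (\<Sum>j=1..N-1. measure M (E j \<inter> E (Suc j)))"
    by (rule chain_bound[OF finite_measure_axioms]) (use Emeas in auto)
  have pE: "(\<Sum>j=1..N. p j) = (\<Sum>j=1..N. measure M (E j))" unfolding p_def E_def by simp
  have R2: "measure M (\<Union>j\<in>{1..N}. E j) \<le> (\<Sum>j=1..N. p j) - (\<Sum>j=1..N-1. measure M (E j \<inter> E (Suc j)))"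
    using R2a pE by simp
  have LB: "pLB j \<le> measure M (E j \<inter> E (Suc j))" if j: "j \<in> {1..N-1}" for j
  proof -
    have j1: "j \<in> {1..N}" and j2: "Suc j \<in> {1..N}" using j by auto
    have "(space M - D j) \<inter> (space M - D (Suc j)) = space M - (D j \<union> D (Suc j))" by auto
    then have "measure M ((space M - D j) \<inter> (space M - D (Suc j))) = 1 - measure M (D j \<union> D (Suc j))"
      using Dmeas[OF j1] Dmeas[OF j2] by (simp add: prob_compl)
    also have "measure M (D j \<union> D (Suc j)) = measure M (D j) + measure M (D (Suc j)) - measure M (D j \<inter> D (Suc j))"
      using Dmeas[OF j1] Dmeas[OF j2] by (intro measure_Un3) (auto simp: fmeasurable_eq_sets)
    finally have eq: "pLB j = measure M ((space M - D j) \<inter> (space M - D (Suc j)))"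
      unfolding pLB_def D_def by simp
    have "measure M ((space M - D j) \<inter> (space M - D (Suc j))) \<le> measure M (E j \<inter> E (Suc j))"
      using compl[OF j1] compl[OF j2] Emeas[OF j1] Emeas[OF j2] by (intro finite_measure_mono) auto
    then show ?thesis using eq by simp
  qed
  have S1: "(\<Sum>j=1..N-1. pLB j) \<le> (\<Sum>j=1..N-1. measure M (E j \<inter> E (Suc j)))"
    using LB by (intro sum_mono) auto
  have S0: "0 \<le> (\<Sum>j=1..N-1. measure M (E j \<inter> E (Suc j)))" by (intro sum_nonneg) auto
  show ?thesis using R1 R2 S1 S0 by linarith
qed

end
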